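(* Consider the iterates of SAS-ADMM (so $L\succeq0$ and $(\tau,s)\in\Delta$) and let $k\ge1$. With $\tilde G_k$ as defined in the context, define $$\omega_0=\Big(2-\tau-s-\frac{(1-s)^2}{1+\tau}\Big)\beta,\qquad \omega_1=\frac{(1-s)^2}{1+\tau}\beta,\qquad \omega_2=\frac{1-\tau}{1+\tau}.$$ Then $\omega_0,\omega_1,\omega_2\ge0$ and $$\|w^k-\tilde w^k\|_{\tilde G_k}^2\ge\|x^k-x^{k+1}\|_{\mathcal D_k}^2+\omega_0\|Ax^{k+1}+By^{k+1}-b\|^2+\omega_1\big(\|Ax^{k+1}+By^{k+1}-b\|^2-\|Ax^k+By^k-b\|^2\big)+\omega_2\big(\|y^k-y^{k+1}\|_L^2-\|y^{k-1}-y^k\|_L^2\big).$$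
   Context: Setting. $\mathcal X\subset\mathbb R^{n_1}$, $\mathcal Y\subset\mathbb R^{n_2}$ are nonempty closed convex sets; $A\in\mathbb R^{n\times n_1}$, $B\in\mathbb R^{n\times n_2}$, $b\in\mathbb R^n$; $g:\mathcal Y\to\mathbb R\cup\{+\infty\}$ is proper convex; $f=\frac1N\sum_{j=1}^N f_j$, each $f_j$ real-valued, convex and continuously differentiable on an open set containing $\mathcal X$. The problem is $\min\{f(x)+g(y): x\in\mathcal X,\ y\in\mathcal Y,\ Ax+By=b\}$. A fixed symmetric positive definite $H\in\mathbb R^{n_1\times n_1}$ and a constant $\nu>0$ satisfy $\|\nabla f_j(x_1)-\nabla f_j(x_2)\|_{H^{-1}}\le \nu\|x_1-x_2\|_H$ for all $x_1,x_2\in\mathcal X$ and all $j$. For a symmetric matrix $G$, $\|v\|_G^2:=v^\top G v$ (also when $G$ is indefinite); $G_1\succeq G_2$ means $G_1-G_2$ is positive semidefinite. $\mathcal L_\beta(x,y,\lambda)=f(x)+g(y)-\lambda^\top(Ax+By-b)+\frac\beta2\|Ax+By-b\|^2$. $\Delta:=\{(\tau,s)\in\mathbb R^2:\ \tau+s>0,\ \tau\le1,\ -\tau^2-s^2-\tau s+\tau+s+1\ge0\}$. Subroutine xsub. Inputs: $x^k\in\mathcal X$, $\breve x^k$, $h\in\mathbb R^{n_1}$, an integer $m_k\ge1$, $\eta_k>0$, a symmetric matrix $M_k$. Set $x_1=x^k$, $\breve x_1=\breve x^k$. For $t=1,\dots,m_k$: draw $\xi_t$ uniformly from $\{1,\dots,N\}$,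 independently of everything generated before; set $\beta_t=2/(t+1)$, $\gamma_t=2/(t\eta_k)$, $\hat x_t=\beta_t\breve x_t+(1-\beta_t)x_t$, $d_t=\nabla f_{\xi_t}(\hat x_t)+e_t$ where $e_t$ is a random vector whose conditional expectation given all previously generated random quantities and $\xi_t$ is $0$; $\breve x_{t+1}=\arg\min_{x\in\mathcal X}\{\langle d_t+h,x\rangle+\frac{\gamma_t}2\|x-\breve x_t\|_H^2+\frac12\|x-x^k\|_{M_k}^2\}$; $x_{t+1}=\beta_t\breve x_{t+1}+(1-\beta_t)x_t$. Output $x^{k+1}=x_{m_k+1}$, $\breve x^{k+1}=\breve x_{m_k+1}$. Algorithm SAS-ADMM. Parameters: $\beta>0$, the matrix $H$, a symmetric positive semidefinite $L\in\mathbb R^{n_2\times n_2}$, $(\tau,s)\in\Delta$. Start: $(x^0,y^0,\lambda^0)\in\mathcal X\times\mathcal Y\times\mathbb R^n$, $\breve x^0=x^0$. For $k=0,1,\dots$: choose an integer $m_k\ge1$, $\eta_k>0$, and a symmetric $M_k$ with $\mathcal D_k:=M_k-\beta A^\top A\succeq0$; set $h^k=-A^\top[\lambda^k-\beta(Ax^k+By^k-b)]$; compute $(x^{k+1},\breve x^{k+1})$ by xsub with inputs $x^k,\breve x^k,h^k,m_k,\eta_k,M_k$; $\lambda^{k+1/2}=\lambda^k-\tau\beta(Ax^{k+1}+By^k-b)$; $y^{k+1}\in\arg\min_{y\in\mathcal Y}\mathcal L_\beta(x^{k+1},y,\lambda^{k+1/2})+\frac12\|y-y^k\|_L^2$ (a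 minimizer is assumed to exist); $\lambda^{k+1}=\lambda^{k+1/2}-s\beta(Ax^{k+1}+By^{k+1}-b)$. Notation. $w^k=(x^k;y^k;\lambda^k)$; $\tilde\lambda^k=\lambda^k-\beta(Ax^{k+1}+By^k-b)$; $\tilde w^k=(x^{k+1};y^{k+1};\tilde\lambda^k)$; $$\tilde G_k=\begin{bmatrix}\mathcal D_k&0&0\\0&L+(1-s)\beta B^\top B&(s-1)B^\top\\0&(s-1)B&\frac{2-\tau-s}{\beta}I\end{bmatrix}.$$ *)

theory Defs
  imports "HOL-Analysis.Analysis"
begin

definition sqnormG :: "real^'n^'n \<Rightarrow> real^'n \<Rightarrow> real" where
  "sqnormG G v = v \<bullet> (G *v v)"

definition sym_mat :: "real^'n^'n \<Rightarrow> bool" where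
  "sym_mat G \<longleftrightarrow> transpose G = G"

text \<open>G1 \<succeq> G2 : G1 - G2 positive semidefinite.\<close>
definition psd :: "real^'n^'n \<Rightarrow> bool" where
  "psd G \<longleftrightarrow> (\<forall>v. 0 \<le> sqnormG G v)"

definition pd :: "real^'n^'n \<Rightarrow> bool" where
  "pd G \<longleftrightarrow> (\<forall>v. v \<noteq> 0 \<longrightarrow> 0 < sqnormG G v)"

definition Delta_set :: "(real \<times> real) set" where
  "Delta_set = {(\<tau>, s). \<tau> + s > 0 \<and> \<tau> \<le> 1 \<and> 0 \<le> - (\<tau>^2) - s^2 - \<tau> * s + \<tau> + s + 1}"

definition proper_convex_ext :: "('n::real_vector) set \<Rightarrow> ('n \<Rightarrow> ereal) \<Rightarrow> bool" where
  "proper_convex_ext Y g \<longleftrightarrow>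
     (\<forall>y\<in>Y. g y \<noteq> -\<infinity>) \<and> (\<exists>y\<in>Y. g y \<noteq> \<infinity>) \<and>
     (\<forall>x\<in>Y. \<forall>y\<in>Y. \<forall>u::real. 0 < u \<and> u < 1 \<longrightarrow>
        g (u *\<^sub>R x + (1 - u) *\<^sub>R y) \<le> ereal u * g x + ereal (1 - u) * g y)"

definition aug_lag ::
  "(real^'a \<Rightarrow> real) \<Rightarrow> (real^'b \<Rightarrow> ereal) \<Rightarrow> real^'a^'c \<Rightarrow> real^'b^'c \<Rightarrow> real^'c \<Rightarrow> real
    \<Rightarrow> real^'a \<Rightarrow> real^'b \<Rightarrow> real^'c \<Rightarrow> ereal" where
  "aug_lag f g A B b \<beta> x y lam =
     ereal (f x) + g y
     + ereal (- (lam \<bullet> (A *v x + B *v y - b)) + \<beta> / 2 * (norm (A *v x + B *v y - b))^2)"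

text \<open>One realisation of subroutine xsub: the sample indices xi t \<in> {1..N} and the
  noise vectors e t are arbitrary (pathwise statement).  xs, bxs are the inner
  sequences x_t and breve x_t, t = 1..m+1; the outputs are xs (m+1), bxs (m+1).\<close>
definition xsub_run ::
  "(real^'a) set \<Rightarrow> nat \<Rightarrow> real^'a^'a \<Rightarrow> (nat \<Rightarrow> real^'a \<Rightarrow> real^'a)
   \<Rightarrow> real^'a \<Rightarrow> real^'a \<Rightarrow> real^'a \<Rightarrow> nat \<Rightarrow> real \<Rightarrow> real^'a^'a
   \<Rightarrow> (nat \<Rightarrow> nat) \<Rightarrow> (nat \<Rightarrow> real^'a) \<Rightarrow> (nat \<Rightarrow> real^'a) \<Rightarrow> (nat \<Rightarrow> real^'a) \<Rightarrow> bool" where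
  "xsub_run X N H gradf xk bxk h m \<eta> M xi e xs bxs \<longleftrightarrow>
     xs 1 = xk \<and> bxs 1 = bxk \<and>
     (\<forall>t\<in>{1..m}.
        let \<beta>t = 2 / (real t + 1);
            \<gamma>t = 2 / (real t * \<eta>);
            hx = \<beta>t *\<^sub>R bxs t + (1 - \<beta>t) *\<^sub>R xs t;
            d = gradf (xi t) hx + e t;
            obj = (\<lambda>z. (d + h) \<bullet> z + \<gamma>t / 2 * sqnormG H (z - bxs t) + 1 / 2 * sqnormG M (z - xk))
        in xi t \<in> {1..N} \<and>
           bxs (t + 1) \<in> X \<and> (\<forall>z\<in>X. obj (bxs (t + 1)) \<le> obj z) \<and>
           xs (t + 1) = \<beta>t *\<^sub>R bxs (t + 1) + (1 - \<beta>t) *\<^sub>R xs t)"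

text \<open>\<parallel>w - w'\<parallel>^2 in the block matrix G~_k, written out blockwise, with
  dx = x-part, dy = y-part, dl = lambda-part of w - w'.\<close>
definition Gtilde_sq ::
  "real^'a^'a \<Rightarrow> real^'b^'b \<Rightarrow> real^'b^'c \<Rightarrow> real \<Rightarrow> real \<Rightarrow> real \<Rightarrow>
   real^'a \<Rightarrow> real^'b \<Rightarrow> real^'c \<Rightarrow> real" where
  "Gtilde_sq D L B \<beta> \<tau> s dx dy dl =
     sqnormG D dx
     + sqnormG (L + ((1 - s) * \<beta>) *\<^sub>R (transpose B ** B)) dy
     + 2 * (s - 1) * (dl \<bullet> (B *v dy))
     + (2 - \<tau> - s) / \<beta> * (dl \<bullet> dl)"

end

theory Submission
  imports Defs
begin

lemma mv_neg:
  fixes M :: "real^'n^'m"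
  shows "M *v (- z) = - (M *v z)"
  using matrix_vector_mult_diff_distrib[of M 0 z] by simp

lemma symL_inner:
  fixes L :: "real^'n^'n"
  assumes "sym_mat L"
  shows "u \<bullet> (L *v w) = w \<bullet> (L *v u)"
proof -
  have "u \<bullet> (L *v w) = (u v* L) \<bullet> w" by (simp add: dot_lmul_matrix)
  also have "u v* L = transpose L *v u" by simp
  also have "\<dots> = L *v u" using assms by (simp add: sym_mat_def)
  finally show ?thesis by (simp add: inner_commute)
qed

lemma scaleR_mat_vec:
  fixes M :: "real^'n^'m"
  shows "(c *\<^sub>R M) *v x = c *\<^sub>R (M *v x)"
  by (simp add: vec_eq_iff matrix_vector_mult_def sum_distrib_left mult.assoc)

lemma BtB_inner:
  fixes B :: "real^'n^'m"
  shows "x \<bullet> ((transpose B ** B) *v x) = (B *v x) \<bullet> (B *v x)"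
proof -
  have "(transpose B ** B) *v x = transpose B *v (B *v x)" by (simp add: matrix_vector_mul_assoc)
  also have "\<dots> = (B *v x) v* B" by simp
  finally have "x \<bullet> ((transpose B ** B) *v x) = x \<bullet> ((B *v x) v* B)" by simp
  also have "\<dots> = ((B *v x) v* B) \<bullet> x" by (simp add: inner_commute)
  also have "\<dots> = (B *v x) \<bullet> (B *v x)" by (simp add: dot_lmul_matrix)
  finally show ?thesis .
qed

lemma small_t:
  fixes a c :: real
  assumes "\<And>t. 0 < t \<Longrightarrow> t < 1 \<Longrightarrow> 0 \<le> t*a + t^2*c"
  shows "0 \<le> a"
proof (rule ccontr)
  assume "\<not> 0 \<le> a"
  hence a: "a < 0" by simp
  define t where "t = min (1/2) (-a/(2*(\<bar>c\<bar>+1)))"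
  have "0 < -a/(2*(\<bar>c\<bar>+1))" using a by (intro divide_pos_pos) auto
  hence t0: "0 < t" by (simp add: t_def)
  have t1: "t < 1" by (simp add: t_def)
  have "t * \<bar>c\<bar> \<le> (-a/(2*(\<bar>c\<bar>+1))) * \<bar>c\<bar>"
    by (rule mult_right_mono) (auto simp: t_def)
  also have "\<dots> \<le> -a/2"
  proof -
    have "(-a/(2*(\<bar>c\<bar>+1))) * \<bar>c\<bar> = (-a/2) * (\<bar>c\<bar>/(\<bar>c\<bar>+1))" by (simp add: field_simps)
    also have "\<dots> \<le> (-a/2) * 1"
      by (rule mult_left_mono) (use a in auto)
    finally show ?thesis by simp
  qed
  finally have tc: "t*\<bar>c\<bar> \<le> -a/2" .
  have "0 \<le> t*a + t^2*c" using assms t0 t1 by blast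
  hence "0 \<le> t*(a + t*c)" by (simp add: power2_eq_square algebra_simps)
  hence "0 \<le> a + t*c" using t0 by (simp add: zero_le_mult_iff)
  moreover have "t*c \<le> t*\<bar>c\<bar>" using t0 by (simp add: mult_left_mono)
  ultimately show False using tc a by linarith
qed

lemma g_fin:
  fixes g :: "real^'b \<Rightarrow> ereal" and F :: "real^'b \<Rightarrow> real"
  assumes g: "proper_convex_ext Y g" and p: "p\<in>Y"
   and opt: "\<And>w. w\<in>Y \<Longrightarrow> g p + ereal (F p) \<le> g w + ereal (F w)"
  shows "g p = ereal (real_of_ereal (g p))"
proof -
  obtain y0 where y0: "y0 \<in> Y" "g y0 \<noteq> \<infinity>" using g unfolding proper_convex_ext_def by blast
  have "g y0 \<noteq> -\<infinity>" using g y0 unfolding proper_convex_ext_def by blast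
  then obtain r where r: "g y0 = ereal r" using y0 by (cases "g y0") auto
  have gpm: "g p \<noteq> -\<infinity>" using g p unfolding proper_convex_ext_def by blast
  have "g p \<noteq> \<infinity>"
  proof
    assume "g p = \<infinity>"
    hence "\<infinity> \<le> ereal (r + F y0)" using opt[OF y0(1)] r by simp
    thus False by simp
  qed
  with gpm show ?thesis by (cases "g p") auto
qed

lemma y_vi:
  fixes g :: "real^'b \<Rightarrow> ereal" and F :: "real^'b \<Rightarrow> real"
  assumes cY: "convex Y" and g: "proper_convex_ext Y g" and p: "p\<in>Y" and z: "z\<in>Y"
   and opt: "\<And>w. w\<in>Y \<Longrightarrow> g p + ereal (F p) \<le> g w + ereal (F w)"
   and Fexp: "\<And>t. F (p + t *\<^sub>R (z - p)) = F p + t*G + t^2*C"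
   and gp: "g p = ereal gp" and gz: "g z = ereal gz"
  shows "0 \<le> gz - gp + G"
proof (rule small_t[where c=C])
  fix t :: real assume t0: "0 < t" and t1: "t < 1"
  define w where "w = t *\<^sub>R z + (1 - t) *\<^sub>R p"
  have wY: "w \<in> Y" unfolding w_def using cY z p t0 t1 by (intro convexD) auto
  have w2: "w = p + t *\<^sub>R (z - p)" unfolding w_def by (simp add: algebra_simps)
  have "g w \<le> ereal t * g z + ereal (1 - t) * g p"
    using g z p t0 t1 unfolding proper_convex_ext_def w_def by blast
  hence gw: "g w \<le> ereal (t*gz + (1-t)*gp)" using gz gp by simp
  have "ereal (gp + F p) \<le> g w + ereal (F w)" using opt[OF wY] gp by simp
  also have "\<dots> \<le> ereal (t*gz + (1-t)*gp) + ereal (F w)" using gw by (rule add_right_mono)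
  finally have "gp + F p \<le> t*gz + (1-t)*gp + F w" by simp
  hence "gp + F p \<le> t*gz + (1-t)*gp + (F p + t*G + t^2*C)" using Fexp w2 by simp
  thus "0 \<le> t * (gz - gp + G) + t\<^sup>2 * C" by (simp add: algebra_simps)
qed

lemma F_exp:
  fixes B :: "real^'b^'c" and L :: "real^'b^'b"
  assumes L: "sym_mat L"
  shows "c0 + (-(lam \<bullet> (ax + B *v (p + t *\<^sub>R d) - b)) + \<beta>/2*(norm (ax + B *v (p + t *\<^sub>R d) - b))^2) + 1/2 * sqnormG L (p + t *\<^sub>R d - y0)
    = (c0 + (-(lam \<bullet> (ax + B *v p - b)) + \<beta>/2*(norm(ax + B *v p - b))^2) + 1/2 * sqnormG L (p - y0))
      + t*(-(lam \<bullet> (B *v d)) + \<beta>*((ax + B *v p - b) \<bullet> (B *v d)) + (p-y0) \<bullet> (L *v d))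
      + t^2*(\<beta>/2*((B *v d) \<bullet> (B *v d)) + 1/2*(d \<bullet> (L *v d)))"
proof -
  define r where "r = ax + B *v p - b"
  define v where "v = B *v d"
  define q where "q = p - y0"
  have e1: "ax + B *v (p + t *\<^sub>R d) - b = r + t *\<^sub>R v"
    by (simp add: r_def v_def matrix_vector_right_distrib matrix_vector_mult_scaleR algebra_simps)
  have e2: "p + t *\<^sub>R d - y0 = q + t *\<^sub>R d" by (simp add: q_def algebra_simps)
  have n: "(norm (r + t *\<^sub>R v))^2 = r \<bullet> r + 2*t*(r \<bullet> v) + t^2*(v \<bullet> v)"
    unfolding power2_norm_eq_inner
    by (simp add: inner_add_left inner_add_right inner_commute power2_eq_square algebra_simps)
  have nr: "(norm r)^2 = r \<bullet> r" by (simp add: power2_norm_eq_inner)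
  have sy: "d \<bullet> (L *v q) = q \<bullet> (L *v d)" using symL_inner[OF L] by blast
  have sq: "sqnormG L (q + t *\<^sub>R d) = sqnormG L q + 2*t*(q \<bullet> (L *v d)) + t^2*(d \<bullet> (L *v d))"
    unfolding sqnormG_def
    by (simp add: matrix_vector_right_distrib matrix_vector_mult_scaleR inner_add_left inner_add_right sy power2_eq_square algebra_simps)
  show ?thesis
    unfolding e1 e2 n
    by (simp add: r_def[symmetric] v_def[symmetric] q_def[symmetric] sq nr inner_add_right algebra_simps)
qed

lemma tau_gt:
  fixes \<tau> s :: real
  assumes "\<tau> + s > 0" "0 \<le> - (\<tau>^2) - s^2 - \<tau> * s + \<tau> + s + 1"
  shows "\<tau> > -1"
proof (rule ccontr)
  assume "\<not> \<tau> > -1" hence t: "\<tau> \<le> -1" by simp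
  have id: "4*(- (\<tau>^2) - s^2 - \<tau> * s + \<tau> + s + 1) = -((2 * s-1+\<tau>)^2 + (5-3*\<tau>)*(-1-\<tau>))"
    by (simp add: power2_eq_square algebra_simps)
  have p: "0 \<le> (5-3*\<tau>)*(-1-\<tau>)" using t by (intro mult_nonneg_nonneg) auto
  have "(2 * s-1+\<tau>)^2 > 0"
  proof -
    have "2 * s-1+\<tau> > 0" using assms(1) t by linarith
    thus ?thesis by simp
  qed
  moreover define q where "q = - (\<tau>^2) - s^2 - \<tau> * s + \<tau> + s + 1"
  ultimately show False using id p assms(2) unfolding q_def[symmetric] by linarith
qed

lemma final_ineq:
  fixes \<beta> \<tau> s Dx uu uv vv vr rr Ly Lp Lc :: real
  assumes b: "\<beta> > 0" and t1: "\<tau> > -1" "\<tau> \<le> 1"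
    and i: "0 \<le> s*\<beta> * vr + \<tau>*\<beta>*(uv+vv) + \<beta>*uv - Ly - \<beta> * vr + Lc"
    and ii: "0 \<le> Ly - 2*Lc + Lp" and iii: "0 \<le> Ly"
    and iv: "0 \<le> (1-\<tau>)^2 * vv + 2*(1-\<tau>)*(1-s) * vr + (1-s)^2*rr"
  shows "Dx + (Ly + (1-s)*\<beta> * vv) + 2*(s-1)*(\<beta>*(uv+vv)) + (2-\<tau>-s)/\<beta>*(\<beta>^2*(uu + 2*uv + vv))
     \<ge> Dx + (2 - \<tau> - s - (1 - s)^2 / (1 + \<tau>)) * \<beta> * uu + (1 - s)^2 / (1 + \<tau>) * \<beta> * (uu - rr)
        + (1 - \<tau>) / (1 + \<tau>) * (Ly - Lp)"
proof -
  define Di where "Di = s*\<beta> * vr + \<tau>*\<beta>*(uv+vv) + \<beta>*uv - Ly - \<beta> * vr + Lc"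
  define Q where "Q = (1-\<tau>)^2 * vv + 2*(1-\<tau>)*(1-s) * vr + (1-s)^2*rr"
  define E where "E = (1+\<tau>)*Ly + \<beta>*Q + (1-\<tau>)*(Ly - 2*Lc + Lp) + 2*(1-\<tau>)*Di"
  have "0 \<le> (1+\<tau>)*Ly" using iii t1 by simp
  moreover have "0 \<le> \<beta>*Q" using iv b Q_def by simp
  moreover have "0 \<le> (1-\<tau>)*(Ly - 2*Lc + Lp)" using ii t1 by simp
  moreover have "0 \<le> 2*(1-\<tau>)*Di" using i t1 Di_def by simp
  ultimately have E0: "0 \<le> E" unfolding E_def by linarith
  have tp: "1 + \<tau> > 0" using t1 by simp
  have h1: "(2-\<tau>-s)/\<beta>*(\<beta>^2*(uu + 2*uv + vv)) = (2-\<tau>-s)*\<beta>*(uu + 2*uv + vv)"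
    using b by (simp add: power2_eq_square)
  define a where "a = (1 - s)^2 / (1 + \<tau>)"
  define c where "c = (1 - \<tau>) / (1 + \<tau>)"
  have ha: "a*(1+\<tau>) = (1-s)^2" using tp by (simp add: a_def)
  have hc: "c*(1+\<tau>) = 1-\<tau>" using tp by (simp add: c_def)
  have h2: "(1+\<tau>) * ((Dx + (Ly + (1-s)*\<beta> * vv) + 2*(s-1)*(\<beta>*(uv+vv)) + (2-\<tau>-s)*\<beta>*(uu + 2*uv + vv))
     - (Dx + (2 - \<tau> - s - a) * \<beta> * uu + a * \<beta> * (uu - rr)
        + c * (Ly - Lp))) = E"
    using ha hc unfolding E_def Di_def Q_def by algebra
  have "(Dx + (Ly + (1-s)*\<beta> * vv) + 2*(s-1)*(\<beta>*(uv+vv)) + (2-\<tau>-s)/\<beta>*(\<beta>^2*(uu + 2*uv + vv)))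
     - (Dx + (2 - \<tau> - s - (1 - s)^2 / (1 + \<tau>)) * \<beta> * uu + (1 - s)^2 / (1 + \<tau>) * \<beta> * (uu - rr)
        + (1 - \<tau>) / (1 + \<tau>) * (Ly - Lp)) = E / (1+\<tau>)"
    unfolding h1 a_def[symmetric] c_def[symmetric] using h2[symmetric] tp by (simp add: field_simps)
  moreover have "0 \<le> E/(1+\<tau>)" using E0 tp by simp
  ultimately show ?thesis by linarith
qed
theorem theorem3p3:
  fixes X :: "(real^'a) set" and Y :: "(real^'b) set"
    and A :: "real^'a^'c" and B :: "real^'b^'c" and b :: "real^'c"
    and g :: "real^'b \<Rightarrow> ereal"
    and N :: nat and fs :: "nat \<Rightarrow> real^'a \<Rightarrow> real" and gradf :: "nat \<Rightarrow> real^'a \<Rightarrow> real^'a"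
    and U :: "(real^'a) set"
    and H :: "real^'a^'a" and \<nu> :: real
    and \<beta> :: real and L :: "real^'b^'b" and \<tau> s :: real
    and x bx :: "nat \<Rightarrow> real^'a" and y :: "nat \<Rightarrow> real^'b" and lam lamh :: "nat \<Rightarrow> real^'c"
    and m :: "nat \<Rightarrow> nat" and \<eta> :: "nat \<Rightarrow> real" and M :: "nat \<Rightarrow> real^'a^'a"
    and xi :: "nat \<Rightarrow> nat \<Rightarrow> nat" and e :: "nat \<Rightarrow> nat \<Rightarrow> real^'a"
    and xin bxin :: "nat \<Rightarrow> nat \<Rightarrow> real^'a"
    and k :: nat
  defines "f \<equiv> (\<lambda>z. (\<Sum>j=1..N. fs j z) / real N)"
  assumes X: "X \<noteq> {}" "closed X" "convex X"
    and Y: "Y \<noteq> {}" "closed Y" "convex Y"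
    and g: "proper_convex_ext Y g"
    and N: "N \<ge> 1"
    and U: "open U" "X \<subseteq> U"
    and fs_diff: "\<And>j z. j \<in> {1..N} \<Longrightarrow> z \<in> U \<Longrightarrow>
                    (fs j has_derivative (\<lambda>v. gradf j z \<bullet> v)) (at z)"
    and fs_C1: "\<And>j. j \<in> {1..N} \<Longrightarrow> continuous_on U (gradf j)"
    and H: "sym_mat H" "pd H"
    and \<nu>: "\<nu> > 0"
    and lip: "\<And>j x1 x2. j \<in> {1..N} \<Longrightarrow> x1 \<in> X \<Longrightarrow> x2 \<in> X \<Longrightarrow>
               sqrt (sqnormG (matrix_inv H) (gradf j x1 - gradf j x2)) \<le> \<nu> * sqrt (sqnormG H (x1 - x2))"
    and \<beta>: "\<beta> > 0"
    and L: "sym_mat L" "psd L"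
    and \<tau>s: "(\<tau>, s) \<in> Delta_set"
    and init: "x 0 \<in> X" "y 0 \<in> Y" "bx 0 = x 0"
    and m: "\<And>j. m j \<ge> 1"
    and \<eta>: "\<And>j. \<eta> j > 0"
    and M: "\<And>j. sym_mat (M j)" "\<And>j. psd (M j - \<beta> *\<^sub>R (transpose A ** A))"
    and xsub: "\<And>j. xsub_run X N H gradf (x j) (bx j)
                 (- (transpose A *v (lam j - \<beta> *\<^sub>R (A *v x j + B *v y j - b))))
                 (m j) (\<eta> j) (M j) (xi j) (e j) (xin j) (bxin j)"
    and xupd: "\<And>j. x (Suc j) = xin j (m j + 1)" "\<And>j. bx (Suc j) = bxin j (m j + 1)"
    and lamh: "\<And>j. lamh j = lam j - (\<tau> * \<beta>) *\<^sub>R (A *v x (Suc j) + B *v y j - b)"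
    and yupd: "\<And>j. y (Suc j) \<in> Y"
              "\<And>j z. z \<in> Y \<Longrightarrow>
                 aug_lag f g A B b \<beta> (x (Suc j)) (y (Suc j)) (lamh j) + ereal (1/2 * sqnormG L (y (Suc j) - y j))
                 \<le> aug_lag f g A B b \<beta> (x (Suc j)) z (lamh j) + ereal (1/2 * sqnormG L (z - y j))"
    and lamupd: "\<And>j. lam (Suc j) = lamh j - (s * \<beta>) *\<^sub>R (A *v x (Suc j) + B *v y (Suc j) - b)"
    and k: "k \<ge> 1"
  shows "(let \<omega>0 = (2 - \<tau> - s - (1 - s)^2 / (1 + \<tau>)) * \<beta>;
              \<omega>1 = (1 - s)^2 / (1 + \<tau>) * \<beta>;
              \<omega>2 = (1 - \<tau>) / (1 + \<tau>);
              D = M k - \<beta> *\<^sub>R (transpose A ** A);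
              r = (\<lambda>j. A *v x j + B *v y j - b);
              lamt = lam k - \<beta> *\<^sub>R (A *v x (Suc k) + B *v y k - b)
          in \<omega>0 \<ge> 0 \<and> \<omega>1 \<ge> 0 \<and> \<omega>2 \<ge> 0 \<and>
             Gtilde_sq D L B \<beta> \<tau> s (x k - x (Suc k)) (y k - y (Suc k)) (lam k - lamt)
             \<ge> sqnormG D (x k - x (Suc k))
               + \<omega>0 * (norm (r (Suc k)))^2
               + \<omega>1 * ((norm (r (Suc k)))^2 - (norm (r k))^2)
               + \<omega>2 * (sqnormG L (y k - y (Suc k)) - sqnormG L (y (k - 1) - y k)))"
proof -
  from \<tau>s have ts: "\<tau> + s > 0" "\<tau> \<le> 1" "0 \<le> - (\<tau>^2) - s^2 - \<tau> * s + \<tau> + s + 1"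
    by (auto simp: Delta_set_def)
  have tg: "\<tau> > -1" using tau_gt ts(1,3) by blast
  obtain k' where kk: "k = Suc k'" using k by (cases k) auto
  define F where "F j w = f (x (Suc j)) + (-(lamh j \<bullet> (A *v x (Suc j) + B *v w - b)) + \<beta>/2*(norm (A *v x (Suc j) + B *v w - b))^2) + 1/2 * sqnormG L (w - y j)" for j w
  have opt: "g (y (Suc j)) + ereal (F j (y (Suc j))) \<le> g w + ereal (F j w)" if w: "w \<in> Y" for j w
  proof -
    have eq: "aug_lag f g A B b \<beta> (x (Suc j)) z (lamh j) + ereal (1/2 * sqnormG L (z - y j)) = g z + ereal (F j z)" for z
      by (cases "g z") (simp_all add: aug_lag_def F_def algebra_simps)
    show ?thesis using yupd(2)[OF w, of j] unfolding eq .
  qed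
  define gr where "gr z = real_of_ereal (g z)" for z
  have gfin: "g (y (Suc j)) = ereal (gr (y (Suc j)))" for j
    unfolding gr_def by (rule g_fin[OF g yupd(1) opt])
  have ykY: "y k \<in> Y" using yupd(1)[of k'] kk by simp
  have gk: "g (y k) = ereal (gr (y k))" using gfin[of k'] kk by simp
  have vi1: "0 \<le> gr (y k) - gr (y (Suc k)) + (-(lamh k \<bullet> (B *v (y k - y (Suc k)))) + \<beta>*((A *v x (Suc k) + B *v y (Suc k) - b) \<bullet> (B *v (y k - y (Suc k)))) + (y (Suc k) - y k) \<bullet> (L *v (y k - y (Suc k))))"
    apply (rule y_vi[OF Y(3) g yupd(1)[of k] ykY opt[where j=k]], assumption)
      apply (unfold F_def, rule F_exp[OF L(1)])
    using gfin gk by auto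
  have vi2: "0 \<le> gr (y (Suc k)) - gr (y (Suc k')) + (-(lamh k' \<bullet> (B *v (y (Suc k) - y (Suc k')))) + \<beta>*((A *v x (Suc k') + B *v y (Suc k') - b) \<bullet> (B *v (y (Suc k) - y (Suc k')))) + (y (Suc k') - y k') \<bullet> (L *v (y (Suc k) - y (Suc k'))))"
    apply (rule y_vi[OF Y(3) g yupd(1)[of k'] yupd(1)[of k] opt[where j=k']], assumption)
      apply (unfold F_def, rule F_exp[OF L(1)])
    using gfin by auto
  define u where "u = A *v x (Suc k) + B *v y (Suc k) - b"
  define dy where "dy = y k - y (Suc k)"
  define v where "v = B *v dy"
  define rk where "rk = A *v x k + B *v y k - b"
  define dyp where "dyp = y k' - y k"
  define Ly where "Ly = dy \<bullet> (L *v dy)"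
  define Lp where "Lp = dyp \<bullet> (L *v dyp)"
  define Lc where "Lc = dyp \<bullet> (L *v dy)"
  have e1: "A *v x (Suc k) + B *v y k - b = u + v"
  proof -
    have "y k = y (Suc k) + dy" by (simp add: dy_def)
    thus ?thesis unfolding u_def v_def by (simp add: matrix_vector_right_distrib algebra_simps)
  qed
  have lamhk: "lamh k = lam k - (\<tau> * \<beta>) *\<^sub>R (u + v)" using lamh[of k] e1 by simp
  have lamk: "lam k = lamh k' - (s * \<beta>) *\<^sub>R rk" using lamupd[of k'] kk by (simp add: rk_def)
  have Bm: "B *v (y (Suc k) - y k) = - v" unfolding v_def dy_def by (simp add: matrix_vector_mult_diff_distrib)
  have dm: "y (Suc k) - y k = - dy" by (simp add: dy_def)
  have vi1': "0 \<le> gr (y k) - gr (y (Suc k)) + (-(lamh k \<bullet> v) + \<beta>*(u \<bullet> v) - Ly)"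
    using vi1 unfolding dy_def[symmetric] v_def[symmetric] u_def[symmetric] dm Ly_def by simp
  have vi2': "0 \<le> gr (y (Suc k)) - gr (y k) + (lamh k' \<bullet> v - \<beta>*(rk \<bullet> v) + Lc)"
  proof -
    have a: "y (Suc k') = y k" "x (Suc k') = x k" using kk by simp_all
    have b: "y k - y k' = - dyp" by (simp add: dyp_def)
    show ?thesis using vi2 unfolding a Bm rk_def[symmetric] b Lc_def dm
      by (simp add: mv_neg v_def[symmetric])
  qed
  have lv: "lamh k \<bullet> v = lamh k' \<bullet> v - s*\<beta>*(rk \<bullet> v) - \<tau>*\<beta>*(u \<bullet> v + v \<bullet> v)"
    unfolding lamhk lamk by (simp add: inner_diff_left inner_add_left algebra_simps)
  have i: "0 \<le> s*\<beta>*(v \<bullet> rk) + \<tau>*\<beta>*(u \<bullet> v + v \<bullet> v) + \<beta>*(u \<bullet> v) - Ly - \<beta>*(v \<bullet> rk) + Lc"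
    using vi1' vi2' lv by (simp add: inner_commute)
  have symL: "\<And>p q. p \<bullet> (L *v q) = q \<bullet> (L *v p)" using symL_inner[OF L(1)] by blast
  have ii: "0 \<le> Ly - 2*Lc + Lp"
  proof -
    have "0 \<le> sqnormG L (dy - dyp)" using L(2) by (simp add: psd_def)
    also have "sqnormG L (dy - dyp) = Ly - 2*Lc + Lp"
      unfolding sqnormG_def Ly_def Lc_def Lp_def
      by (simp add: matrix_vector_mult_diff_distrib inner_diff_left inner_diff_right symL[of dy dyp])
    finally show ?thesis .
  qed
  have iii: "0 \<le> Ly" using L(2) by (simp add: psd_def sqnormG_def Ly_def)
  have iv: "0 \<le> (1-\<tau>)^2*(v \<bullet> v) + 2*(1-\<tau>)*(1-s)*(v \<bullet> rk) + (1-s)^2*(rk \<bullet> rk)"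
  proof -
    have "0 \<le> ((1-\<tau>) *\<^sub>R v + (1-s) *\<^sub>R rk) \<bullet> ((1-\<tau>) *\<^sub>R v + (1-s) *\<^sub>R rk)" by simp
    also have "\<dots> = (1-\<tau>)^2*(v \<bullet> v) + 2*(1-\<tau>)*(1-s)*(v \<bullet> rk) + (1-s)^2*(rk \<bullet> rk)"
      by (simp add: inner_add_left inner_add_right inner_commute power2_eq_square algebra_simps)
    finally show ?thesis .
  qed
  have fin: "Gtilde_sq (M k - \<beta> *\<^sub>R (transpose A ** A)) L B \<beta> \<tau> s (x k - x (Suc k)) (y k - y (Suc k))
        (lam k - (lam k - \<beta> *\<^sub>R (A *v x (Suc k) + B *v y k - b)))
      = sqnormG (M k - \<beta> *\<^sub>R (transpose A ** A)) (x k - x (Suc k)) + (Ly + (1-s)*\<beta> * (v \<bullet> v)) + 2*(s-1)*(\<beta>*(u \<bullet> v + v \<bullet> v))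
        + (2-\<tau>-s)/\<beta>*(\<beta>^2*(u \<bullet> u + 2*(u \<bullet> v) + v \<bullet> v))"
  proof -
    have s1: "sqnormG (L + ((1 - s) * \<beta>) *\<^sub>R (transpose B ** B)) dy = Ly + (1-s)*\<beta> * (v \<bullet> v)"
      unfolding sqnormG_def Ly_def v_def
      by (simp add: matrix_vector_mult_add_rdistrib scaleR_mat_vec inner_add_right BtB_inner)
    have s2: "lam k - (lam k - \<beta> *\<^sub>R (A *v x (Suc k) + B *v y k - b)) = \<beta> *\<^sub>R (u + v)"
      using e1 by simp
    show ?thesis unfolding Gtilde_sq_def dy_def[symmetric] s1 s2 v_def[symmetric]
      by (simp add: inner_add_left inner_add_right inner_commute power2_eq_square algebra_simps)
  qed
  have nu: "(norm u)^2 = u \<bullet> u" "(norm rk)^2 = rk \<bullet> rk" by (simp_all add: power2_norm_eq_inner)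
  have km: "k - 1 = k'" using kk by simp
  have w0: "0 \<le> (2 - \<tau> - s - (1 - s)^2 / (1 + \<tau>)) * \<beta>"
  proof -
    have tp: "0 < 1 + \<tau>" using tg by simp
    have "(1 - s)^2 / (1 + \<tau>) \<le> 2 - \<tau> - s"
    proof -
      have "(1-s)^2 \<le> (2 - \<tau> - s)*(1+\<tau>)" using ts(3) by (simp add: power2_eq_square algebra_simps)
      thus ?thesis using tp by (simp add: divide_le_eq)
    qed
    thus ?thesis using \<beta> by simp
  qed
  have w1: "0 \<le> (1 - s)^2 / (1 + \<tau>) * \<beta>" using tg \<beta> by simp
  have w2: "0 \<le> (1 - \<tau>) / (1 + \<tau>)" using tg ts(2) by simp
  have main: "Dx + (Ly + (1-s)*\<beta> * (v \<bullet> v)) + 2*(s-1)*(\<beta>*(u \<bullet> v + v \<bullet> v)) + (2-\<tau>-s)/\<beta>*(\<beta>^2*(u \<bullet> u + 2*(u \<bullet> v) + v \<bullet> v))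
     \<ge> Dx + (2 - \<tau> - s - (1 - s)^2 / (1 + \<tau>)) * \<beta> * (u \<bullet> u) + (1 - s)^2 / (1 + \<tau>) * \<beta> * (u \<bullet> u - rk \<bullet> rk)
        + (1 - \<tau>) / (1 + \<tau>) * (Ly - Lp)" for Dx
    by (rule final_ineq[OF \<beta> tg ts(2) i ii iii iv])
  show ?thesis
    unfolding Let_def fin km
    using w0 w1 w2 main
    by (simp add: u_def[symmetric] rk_def[symmetric] nu dy_def[symmetric] dyp_def[symmetric] Ly_def[symmetric] Lp_def[symmetric] sqnormG_def)
qed

end
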